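(* Let $n\ge3$, $a>0$, $\sigma>1/2$, $b\in\mathbb{R}^n\setminus\{0\}$, and let $V_{-1}(|x+b|)$ and $V_1(|x-b|)$ be real-valued, radially decreasing (about $-b$ and $b$ respectively), smooth potentials of compact support. For an integer $N\ge1$ let $\gamma_N=\sum_{k=-N}^N\gamma_{kb}$. For $j\in\{-1,1\}$ let $S_N^{(j)}=\{x:\ i[V_j(|x-jb|),\gamma_N](x)<0\}$ and let $\chi_N^{(j)}$ be its characteristic function. Then for each $N$ and $j$, $$ i[V_j(|x-jb|),\gamma_N]\ \ge\ -4f(\infty)\,|V_j'(|x-jb|)|\,\chi_N^{(j)}(x), $$ and $S_N^{(j)}\subset\{x:\ |\vec y|\le\delta_N\}\cap\operatorname{supp}V_j(|\cdot-jb|)$ for numbers $\delta_N$ with $\delta_N\to0$ as $N\to\infty$, where $\vec y$ denotes the component of $x$ orthogonal to $b$.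
   Context: Notation: $g(r)=(1+ar^2)^{-\sigma/2}$; $f(r)=\int_0^r g^2(s)\,ds$, $f(\infty)=\lim_{r\to\infty}f(r)=M_\sigma/\sqrt a$ with $M_\sigma=\int_0^\infty(1+s^2)^{-\sigma}ds$; $F(x)=\int_0^{|x|}f(t)\,dt$; $F_c(x)=F(x-c)$, $\gamma_c=i[-\Delta,F_c]$. For a potential $W$, $i[W,\gamma_c]$ is the multiplication operator by $-2\nabla F_c\cdot\nabla W$, so $i[V_j,\gamma_N]$ is a function of $x$. $V_j'$ is the radial derivative. *)

theory Defs
  imports "HOL-Analysis.Analysis"
begin

definition gfun :: "real \<Rightarrow> real \<Rightarrow> real \<Rightarrow> real" where
  "gfun a \<sigma> r = (1 + a * r\<^sup>2) powr (- \<sigma> / 2)"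

definition ffun :: "real \<Rightarrow> real \<Rightarrow> real \<Rightarrow> real" where
  "ffun a \<sigma> r = integral {0..r} (\<lambda>s. (gfun a \<sigma> s)\<^sup>2)"

definition Msig :: "real \<Rightarrow> real" where
  "Msig \<sigma> = integral {0..} (\<lambda>s. (1 + s\<^sup>2) powr (- \<sigma>))"

definition finf :: "real \<Rightarrow> real \<Rightarrow> real" where
  "finf a \<sigma> = Msig \<sigma> / sqrt a"

text \<open>Gradient of F_c(x) = F(x - c), F(x) = int_0^{|x|} f: it equals f(|x-c|) (x-c)/|x-c|
  (and 0 at x = c, where f(0) = 0).\<close>
definition gradF :: "real \<Rightarrow> real \<Rightarrow> 'a::euclidean_space \<Rightarrow> 'a \<Rightarrow> 'a" where
  "gradF a \<sigma> c x = ffun a \<sigma> (norm (x - c)) *\<^sub>R sgn (x - c)"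

definition gradRad :: "(real \<Rightarrow> real) \<Rightarrow> 'a::euclidean_space \<Rightarrow> 'a \<Rightarrow> 'a" where
  "gradRad V p x = deriv V (norm (x - p)) *\<^sub>R sgn (x - p)"

text \<open>i[W, gamma_c] is multiplication by -2 grad F_c . grad W, for W(x) = V(|x-p|);
  i[W, gamma_N] with gamma_N = sum_{k=-N}^N gamma_{kb}.\<close>
definition commN :: "real \<Rightarrow> real \<Rightarrow> 'a::euclidean_space \<Rightarrow> nat \<Rightarrow> (real \<Rightarrow> real) \<Rightarrow> 'a \<Rightarrow> 'a \<Rightarrow> real" where
  "commN a \<sigma> b N V p x =
     (\<Sum>k\<in>{- int N..int N}. - 2 * (gradF a \<sigma> (of_int k *\<^sub>R b) x \<bullet> gradRad V p x))"

coinductive smooth_fun :: "('a::euclidean_space \<Rightarrow> real) \<Rightarrow> bool" where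
  "f differentiable_on UNIV \<Longrightarrow> (\<And>v. smooth_fun (\<lambda>x. frechet_derivative f (at x) v))
     \<Longrightarrow> smooth_fun f"

definition orth_comp :: "'a::euclidean_space \<Rightarrow> 'a \<Rightarrow> 'a" where
  "orth_comp b x = x - ((x \<bullet> b) / (b \<bullet> b)) *\<^sub>R b"

end

theory Submission
  imports Defs
begin

lemma gsq: "a \<ge> 0 \<Longrightarrow> (gfun a \<sigma> s)\<^sup>2 = (1 + a * s\<^sup>2) powr (-\<sigma>)"
proof -
  assume "a \<ge> 0"
  then have p: "1 + a * s\<^sup>2 > 0" by (simp add: add_pos_nonneg)
  have "(gfun a \<sigma> s)\<^sup>2 = (1 + a * s\<^sup>2) powr (-\<sigma>/2 + -\<sigma>/2)"
    unfolding gfun_def power2_eq_square powr_add by simp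
  then show ?thesis by simp
qed

lemma pos1: "(a::real) \<ge> 0 \<Longrightarrow> 0 < 1 + a * s\<^sup>2"
  by (smt (verit) mult_nonneg_nonneg zero_le_power2)

lemma cont_h: "a \<ge> 0 \<Longrightarrow> continuous_on S (\<lambda>s::real. (1 + a * s\<^sup>2) powr (-\<sigma>))"
  by (intro continuous_intros) (metis pos1 less_irrefl)

lemma int_h: "a \<ge> 0 \<Longrightarrow> (\<lambda>s::real. (1 + a * s\<^sup>2) powr (-\<sigma>)) integrable_on {u..v}"
  by (intro integrable_continuous_interval cont_h)

lemma ffun_alt: "a \<ge> 0 \<Longrightarrow> ffun a \<sigma> r = integral {0..r} (\<lambda>s. (1 + a * s\<^sup>2) powr (-\<sigma>))"
  unfolding ffun_def by (simp add: gsq)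

lemma ffun_nonneg: "a \<ge> 0 \<Longrightarrow> 0 \<le> ffun a \<sigma> r"
  unfolding ffun_alt by (intro integral_nonneg int_h) auto

lemma ffun_mono: assumes "a \<ge> 0" "0 \<le> r" "r \<le> r'" shows "ffun a \<sigma> r \<le> ffun a \<sigma> r'"
  unfolding ffun_alt[OF assms(1)]
  by (intro integral_subset_le int_h assms) (use assms in auto)

lemma ffun_lower: assumes "a \<ge> 0" "0 \<le> r" "\<sigma> \<ge> 0"
  shows "(1+a) powr (-\<sigma>) * min r 1 \<le> ffun a \<sigma> r"
proof -
  have "ffun a \<sigma> (min r 1) \<le> ffun a \<sigma> r" by (rule ffun_mono) (use assms in auto)
  moreover have "integral {0..min r 1} (\<lambda>s. (1+a) powr (-\<sigma>)) \<le> ffun a \<sigma> (min r 1)"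
    unfolding ffun_alt[OF assms(1)]
  proof (rule integral_le)
    show "(\<lambda>s. (1+a) powr (-\<sigma>)) integrable_on {0..min r 1}" by (rule integrable_const_ivl)
    show "(\<lambda>s. (1 + a * s\<^sup>2) powr (-\<sigma>)) integrable_on {0..min r 1}" by (rule int_h[OF assms(1)])
    fix s assume s: "s \<in> {0..min r 1}"
    show "(1+a) powr (-\<sigma>) \<le> (1 + a * s\<^sup>2) powr (-\<sigma>)"
    proof (rule powr_mono2')
      show "- \<sigma> \<le> 0" using assms by simp
      show "0 < 1 + a * s\<^sup>2" using assms(1) by (rule pos1)
      have "s\<^sup>2 \<le> 1" using s by (simp add: abs_square_le_1)
      then show "1 + a * s\<^sup>2 \<le> 1 + a" using assms mult_left_mono[of "s\<^sup>2" 1 a] by simp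
    qed
  qed
  moreover have "integral {0..min r 1} (\<lambda>s. (1+a) powr (-\<sigma>)) = (1+a) powr (-\<sigma>) * min r 1"
    using assms by simp
  ultimately show ?thesis by linarith
qed

lemma int_g: assumes "\<sigma> > 1/2"
  shows "(\<lambda>u::real. (max u 1) powr (-2*\<sigma>)) integrable_on {0..}"
proof -
  have i1: "(\<lambda>u::real. (max u 1) powr (-2*\<sigma>)) integrable_on {0..1}"
    by (intro integrable_continuous_interval continuous_intros) auto
  have "((\<lambda>u::real. u powr (-2*\<sigma>)) has_integral -(1 powr (-2*\<sigma>+1)) / (-2*\<sigma>+1)) {1..}"
    by (rule has_integral_powr_to_inf) (use assms in auto)
  then have "((\<lambda>u::real. (max u 1) powr (-2*\<sigma>)) has_integral -(1 powr (-2*\<sigma>+1)) / (-2*\<sigma>+1)) {1..}"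
    by (rule has_integral_eq[rotated]) (simp add: max_def)
  then have i2: "(\<lambda>u::real. (max u 1) powr (-2*\<sigma>)) integrable_on {1..}"
    unfolding integrable_on_def by blast
  obtain I1 where I1: "((\<lambda>u::real. (max u 1) powr (-2*\<sigma>)) has_integral I1) {0..1}" using i1 by blast
  obtain I2 where I2: "((\<lambda>u::real. (max u 1) powr (-2*\<sigma>)) has_integral I2) {1..}" using i2 by blast
  have "((\<lambda>u::real. (max u 1) powr (-2*\<sigma>)) has_integral I1 + I2) ({0..1} \<union> {1..})"
    by (rule has_integral_Un[OF I1 I2]) (auto intro: negligible_finite)
  moreover have "{0..1} \<union> {1..} = {0::real..}" by auto
  ultimately show ?thesis unfolding integrable_on_def by auto
qed

lemma int_h1: assumes "\<sigma> > 1/2"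
  shows "(\<lambda>u::real. (1 + 1 * u\<^sup>2) powr (-\<sigma>)) integrable_on {0..}"
proof (rule integrable_on_all_intervals_integrable_bound[OF _ _ int_g[OF assms]])
  fix l u :: real
  show "(\<lambda>x. if x \<in> {0..} then (1 + 1 * x\<^sup>2) powr (-\<sigma>) else 0) integrable_on cbox l u"
    unfolding integrable_restrict_Int
  proof -
    have e: "{0..} \<inter> cbox l u = {max 0 l..u}" by auto
    show "(\<lambda>x. (1 + 1 * x\<^sup>2) powr (-\<sigma>)) integrable_on {0..} \<inter> cbox l u"
      unfolding e by (rule int_h) simp
  qed
next
  fix x :: real assume x: "x \<in> {0..}"
  have "(1 + 1 * x\<^sup>2) powr (-\<sigma>) \<le> ((max x 1)\<^sup>2) powr (-\<sigma>)"
  proof (rule powr_mono2')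
    show "-\<sigma> \<le> 0" using assms by simp
    show "0 < (max x 1)\<^sup>2" by simp
    show "(max x 1)\<^sup>2 \<le> 1 + 1 * x\<^sup>2"
    proof (cases "x \<le> 1")
      case True then show ?thesis by (simp add: max_def)
    next
      case False then show ?thesis by (simp add: max_def)
    qed
  qed
  also have "\<dots> = (max x 1) powr (-2*\<sigma>)"
  proof -
    have m: "0 < max x 1" by simp
    have "(max x 1)\<^sup>2 = (max x 1) powr (2::real)" using powr_realpow[OF m, of 2] by simp
    then have "((max x 1)\<^sup>2) powr (-\<sigma>) = (max x 1) powr (2 * -\<sigma>)" by (simp only: powr_powr)
    then show ?thesis by simp
  qed
  finally show "norm ((1 + 1 * x\<^sup>2) powr (-\<sigma>)) \<le> (max x 1) powr (-2*\<sigma>)" by simp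
qed

lemma ffun_le_finf: assumes a: "a > 0" and s: "\<sigma> > 1/2" and r: "0 \<le> r"
  shows "ffun a \<sigma> r \<le> finf a \<sigma>"
proof -
  have "ffun a \<sigma> r = integral ((\<lambda>x. x / sqrt a) ` {0..sqrt a * r}) (\<lambda>x. (\<lambda>u. (1 + 1 * u\<^sup>2) powr (-\<sigma>)) (sqrt a * x))"
    using a unfolding ffun_alt[OF less_imp_le[OF a]]
    by (simp add: image_divide_atLeastAtMost power_mult_distrib)
  also have "\<dots> = (1 / sqrt a) * integral {0..sqrt a * r} (\<lambda>u. (1 + 1 * u\<^sup>2) powr (-\<sigma>))"
    using a by (subst integral_stretch_real) auto
  also have "\<dots> \<le> (1 / sqrt a) * Msig \<sigma>"
    unfolding Msig_def
  proof (rule mult_left_mono)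
    have "integral {0..sqrt a * r} (\<lambda>u. (1 + 1 * u\<^sup>2) powr (-\<sigma>)) \<le> integral {0..} (\<lambda>u. (1 + 1 * u\<^sup>2) powr (-\<sigma>))"
    proof (rule integral_subset_le)
      show "(\<lambda>u. (1 + 1 * u\<^sup>2) powr (-\<sigma>)) integrable_on {0..}" by (rule int_h1[OF s])
      show "(\<lambda>u. (1 + 1 * u\<^sup>2) powr (-\<sigma>)) integrable_on {0..sqrt a * r}" by (rule int_h) simp
      show "{0..sqrt a * r} \<subseteq> {0..}" by auto
      show "\<forall>x\<in>{0..}. 0 \<le> (1 + 1 * x\<^sup>2) powr (-\<sigma>)" by simp
    qed
    then show "integral {0..sqrt a * r} (\<lambda>u. (1 + 1 * u\<^sup>2) powr (-\<sigma>)) \<le> integral {0..} (\<lambda>s. (1 + s\<^sup>2) powr (-\<sigma>))"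
      by simp
  qed (use a in auto)
  finally show ?thesis unfolding finf_def by simp
qed

lemma sum_shift_int: fixes h :: "int \<Rightarrow> real"
  shows "(\<Sum>k\<in>{- int N..int N}. h (k+1)) = (\<Sum>k\<in>{- int N..int N}. h k) + h (int N + 1) - h (- int N)"
proof (induction N)
  case 0 then show ?case by simp
next
  case (Suc N)
  have e: "{- int (Suc N)..int (Suc N)} = insert (- int N - 1) (insert (int N + 1) {- int N..int N})" by auto
  have 1: "h (- 1 - int N) = h (- int N - 1)" by (rule arg_cong[where f=h]) simp
  show ?case unfolding e using Suc 1 by (simp add: algebra_simps)
qed

lemma sum_neg_int: fixes h :: "int \<Rightarrow> real"
  shows "(\<Sum>k\<in>{- int N..int N}. h (-k)) = (\<Sum>k\<in>{- int N..int N}. h k)"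
  by (rule sum.reindex_bij_witness[of _ uminus uminus]) auto

lemma aux1: "0 \<le> (M::real) \<Longrightarrow> 0 \<le> P \<Longrightarrow> -2*M*\<bar>z\<bar> \<le> P"
proof -
  assume "0 \<le> M" "0 \<le> P"
  then have "0 \<le> 2*M*\<bar>z\<bar>" by simp
  then show ?thesis using \<open>0 \<le> P\<close> by linarith
qed

lemma aux2: "\<bar>P\<bar> \<le> \<bar>z\<bar> * (2*M) \<Longrightarrow> -2*M*\<bar>z\<bar> \<le> (P::real)"
proof -
  assume "\<bar>P\<bar> \<le> \<bar>z\<bar> * (2*M)"
  then have "-(\<bar>z\<bar> * (2*M)) \<le> P" by linarith
  moreover have "-2*M*\<bar>z\<bar> = -(\<bar>z\<bar> * (2*M))" by simp
  ultimately show ?thesis by linarith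
qed

locale oddphi =
  fixes \<phi> :: "real \<Rightarrow> real" and M \<beta> :: real
  assumes odd: "\<And>z. \<phi> (-z) = - \<phi> z"
    and mono: "\<And>z w. z \<le> w \<Longrightarrow> \<phi> z \<le> \<phi> w"
    and bnd: "\<And>z. \<bar>\<phi> z\<bar> \<le> M"
    and beta: "\<beta> > 0"
begin

definition S :: "nat \<Rightarrow> real \<Rightarrow> real" where
  "S N s = (\<Sum>k\<in>{- int N..int N}. \<phi> (s - of_int k * \<beta>))"

lemma S_nonneg: assumes "s \<ge> 0" shows "S N s \<ge> 0"
proof -
  have "2 * S N s = (\<Sum>k\<in>{- int N..int N}. \<phi> (s - of_int k * \<beta>)) + (\<Sum>k\<in>{- int N..int N}. \<phi> (s - of_int (-k) * \<beta>))"
    unfolding S_def by (subst sum_neg_int[of "\<lambda>k. \<phi> (s - of_int k * \<beta>)"]) simp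
  also have "\<dots> = (\<Sum>k\<in>{- int N..int N}. \<phi> (s - of_int k * \<beta>) + \<phi> (s + of_int k * \<beta>))"
    by (simp add: sum.distrib)
  also have "\<dots> \<ge> 0"
  proof (rule sum_nonneg)
    fix k :: int
    have "\<phi> (of_int k * \<beta> - s) \<le> \<phi> (s + of_int k * \<beta>)" by (rule mono) (use assms in simp)
    moreover have "\<phi> (of_int k * \<beta> - s) = - \<phi> (s - of_int k * \<beta>)" using odd[of "s - of_int k * \<beta>"] by simp
    ultimately show "0 \<le> \<phi> (s - of_int k * \<beta>) + \<phi> (s + of_int k * \<beta>)" by simp
  qed
  finally show ?thesis by simp
qed

lemma S_odd: "S N (-s) = - S N s"
proof -
  have "S N (-s) = (\<Sum>k\<in>{- int N..int N}. \<phi> (-s - of_int (-k) * \<beta>))"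
    unfolding S_def by (subst sum_neg_int[of "\<lambda>k. \<phi> (-s - of_int k * \<beta>)", symmetric]) simp
  also have "\<dots> = (\<Sum>k\<in>{- int N..int N}. - \<phi> (s - of_int k * \<beta>))"
    by (intro sum.cong refl) (subst odd[symmetric], simp)
  finally show ?thesis unfolding S_def by (simp add: sum_negf)
qed

lemma S_nonpos: assumes "s \<le> 0" shows "S N s \<le> 0"
  using S_nonneg[of "-s" N] S_odd[of N s] assms by simp

lemma S_shift: "S N (s - \<beta>) = S N s + \<phi> (s - (of_int (int N) + 1) * \<beta>) - \<phi> (s + of_int (int N) * \<beta>)"
proof -
  have "S N (s - \<beta>) = (\<Sum>k\<in>{- int N..int N}. (\<lambda>k. \<phi> (s - of_int k * \<beta>)) (k+1))"
    unfolding S_def by (intro sum.cong refl) (simp add: algebra_simps)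
  also have "\<dots> = S N s + \<phi> (s - (of_int (int N) + 1) * \<beta>) - \<phi> (s + of_int (int N) * \<beta>)"
    unfolding S_def using sum_shift_int[of "\<lambda>k. \<phi> (s - of_int k * \<beta>)" N] by simp
  finally show ?thesis .
qed

lemma S_upper: assumes "0 \<le> s" "s \<le> \<beta>" shows "S N s \<le> 2 * M"
proof -
  have "S N (s - \<beta>) \<le> 0" using S_nonpos assms by simp
  moreover have "\<bar>\<phi> (s - (of_int (int N) + 1) * \<beta>)\<bar> \<le> M" "\<bar>\<phi> (s + of_int (int N) * \<beta>)\<bar> \<le> M" by (rule bnd)+
  ultimately show ?thesis using S_shift[of N s] by linarith
qed

lemma S_lower: assumes "-\<beta> \<le> s" "s \<le> 0" shows "S N s \<ge> - 2 * M"
proof -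
  have "S N (s + \<beta>) \<ge> 0" using S_nonneg assms by simp
  moreover have "\<bar>\<phi> (s + \<beta> - (of_int (int N) + 1) * \<beta>)\<bar> \<le> M" "\<bar>\<phi> (s + \<beta> + of_int (int N) * \<beta>)\<bar> \<le> M" by (rule bnd)+
  ultimately show ?thesis using S_shift[of N "s + \<beta>"] by simp
qed

lemma key: assumes "j \<in> {-1, 1::int}"
  shows "(s - of_int j * \<beta>) * S N s \<ge> - 2 * M * \<bar>s - of_int j * \<beta>\<bar>"
proof -
  have M: "M \<ge> 0" using bnd[of 0] by simp
  consider "j = 1" | "j = -1" using assms by auto
  then show ?thesis
  proof cases
    case 1
    show ?thesis
    proof (cases "s \<ge> \<beta>")
      case True
      then have "0 \<le> (s - \<beta>) * S N s" using S_nonneg[of s N] beta by simp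
      then show ?thesis using 1 M aux1 by simp
    next
      case False
      show ?thesis
      proof (cases "s \<le> 0")
        case True
        then have "0 \<le> (s - \<beta>) * S N s" using S_nonpos[of s N] beta False
          by (simp add: mult_nonpos_nonpos)
        then show ?thesis using 1 M aux1 by simp
      next
        case F2: False
        have "0 \<le> S N s" "S N s \<le> 2 * M" using S_nonneg[of s N] S_upper[of s N] F2 False by auto
        then have "\<bar>S N s\<bar> \<le> 2 * M" by simp
        then have "\<bar>(s - \<beta>) * S N s\<bar> \<le> \<bar>s - \<beta>\<bar> * (2*M)" by (simp add: abs_mult mult_left_mono)
        then show ?thesis using 1 aux2 by simp
      qed
    qed
  next
    case 2
    show ?thesis
    proof (cases "s \<le> -\<beta>")
      case True
      then have "0 \<le> (s + \<beta>) * S N s" using S_nonpos[of s N] beta by (simp add: mult_nonpos_nonpos)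
      then show ?thesis using 2 M aux1 by simp
    next
      case False
      show ?thesis
      proof (cases "s \<ge> 0")
        case True
        then have "0 \<le> (s + \<beta>) * S N s" using S_nonneg[of s N] beta False by simp
        then show ?thesis using 2 M aux1 by simp
      next
        case F2: False
        have "S N s \<le> 0" "- 2 * M \<le> S N s" using S_nonpos[of s N] S_lower[of s N] F2 False by auto
        then have "\<bar>S N s\<bar> \<le> 2 * M" by simp
        then have "\<bar>(s + \<beta>) * S N s\<bar> \<le> \<bar>s + \<beta>\<bar> * (2*M)" by (simp add: abs_mult mult_left_mono)
        then show ?thesis using 2 aux2 by simp
      qed
    qed
  qed
qed

end

lemma decomp:
  fixes b x :: "'a::euclidean_space"
  assumes b: "b \<noteq> 0"
  defines "e \<equiv> sgn b" and "s \<equiv> x \<bullet> sgn b" and "Y \<equiv> orth_comp b x"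
  shows "Y = x - s *\<^sub>R e" "Y \<bullet> e = 0" "norm e = 1"
    "\<And>c. x - c *\<^sub>R b = (s - c * norm b) *\<^sub>R e + Y"
    "\<And>c. (norm (x - c *\<^sub>R b))\<^sup>2 = (s - c * norm b)\<^sup>2 + (norm Y)\<^sup>2"
    "\<And>c d. (x - c *\<^sub>R b) \<bullet> (x - d *\<^sub>R b) = (s - c * norm b) * (s - d * norm b) + (norm Y)\<^sup>2"
proof -
  have nb: "norm b > 0" using b by simp
  have bb: "b \<bullet> b = (norm b)\<^sup>2" by (simp add: power2_norm_eq_inner)
  have ni: "norm b * inverse (norm b) = 1" using nb by simp
  have be: "b = norm b *\<^sub>R e" unfolding e_def by (simp add: sgn_div_norm ni)
  show ne: "norm e = 1" unfolding e_def using b by (simp add: norm_sgn)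
  have ee: "e \<bullet> e = 1" using ne by (simp add: norm_eq_1)
  show Y: "Y = x - s *\<^sub>R e"
    unfolding Y_def orth_comp_def s_def e_def using nb
    by (simp add: sgn_div_norm bb inner_scaleR_right power2_eq_square field_simps)
  show Ye: "Y \<bullet> e = 0" unfolding Y s_def e_def[symmetric] by (simp add: inner_diff_left ee)
  show dec: "x - c *\<^sub>R b = (s - c * norm b) *\<^sub>R e + Y" for c
    unfolding Y by (subst be) (simp add: algebra_simps)
  have eY: "e \<bullet> Y = 0" using Ye by (simp add: inner_commute)
  have ip: "(x - c *\<^sub>R b) \<bullet> (x - d *\<^sub>R b) = (s - c * norm b) * (s - d * norm b) + (norm Y)\<^sup>2" for c d
    unfolding dec by (simp add: inner_add_left inner_add_right Ye eY ee power2_norm_eq_inner)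
  then show "(x - c *\<^sub>R b) \<bullet> (x - d *\<^sub>R b) = (s - c * norm b) * (s - d * norm b) + (norm Y)\<^sup>2" for c d .
  show "(norm (x - c *\<^sub>R b))\<^sup>2 = (s - c * norm b)\<^sup>2 + (norm Y)\<^sup>2" for c
    using ip[of c c] by (simp only: power2_norm_eq_inner, simp add: power2_eq_square)
qed

definition phi :: "real \<Rightarrow> real \<Rightarrow> real \<Rightarrow> real \<Rightarrow> real" where
  "phi a \<sigma> y z = ffun a \<sigma> (sqrt (z\<^sup>2 + y\<^sup>2)) * z / sqrt (z\<^sup>2 + y\<^sup>2)"

lemma phi_odd: "phi a \<sigma> y (-z) = - phi a \<sigma> y z"
  unfolding phi_def by simp

lemma q_mono: assumes "0 \<le> z" "z \<le> w"
  shows "z / sqrt (z\<^sup>2 + y\<^sup>2) \<le> w / sqrt (w\<^sup>2 + y\<^sup>2)"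
proof (cases "z = 0")
  case True then show ?thesis using assms by simp
next
  case False
  then have z: "z > 0" using assms by simp
  have w: "w > 0" using z assms by simp
  have pz: "sqrt (z\<^sup>2 + y\<^sup>2) > 0" using z by (simp add: add_pos_nonneg)
  have pw: "sqrt (w\<^sup>2 + y\<^sup>2) > 0" using w by (simp add: add_pos_nonneg)
  have "z\<^sup>2 \<le> w\<^sup>2" using assms by (simp add: power_mono)
  then have "z\<^sup>2 * y\<^sup>2 \<le> w\<^sup>2 * y\<^sup>2" by (simp add: mult_right_mono)
  then have "z\<^sup>2 * (w\<^sup>2 + y\<^sup>2) \<le> w\<^sup>2 * (z\<^sup>2 + y\<^sup>2)" by (simp add: algebra_simps)
  then have "sqrt (z\<^sup>2 * (w\<^sup>2 + y\<^sup>2)) \<le> sqrt (w\<^sup>2 * (z\<^sup>2 + y\<^sup>2))" by (rule real_sqrt_le_mono)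
  then have "z * sqrt (w\<^sup>2 + y\<^sup>2) \<le> w * sqrt (z\<^sup>2 + y\<^sup>2)"
    using z w by (simp add: real_sqrt_mult)
  then show ?thesis using pz pw by (simp add: divide_le_eq le_divide_eq mult.commute mult.left_commute)
qed

lemma phi_mono_nonneg: assumes a: "a > 0" and "0 \<le> z" "z \<le> w"
  shows "phi a \<sigma> y z \<le> phi a \<sigma> y w"
proof -
  have f: "ffun a \<sigma> (sqrt (z\<^sup>2 + y\<^sup>2)) \<le> ffun a \<sigma> (sqrt (w\<^sup>2 + y\<^sup>2))"
  proof (rule ffun_mono)
    show "sqrt (z\<^sup>2 + y\<^sup>2) \<le> sqrt (w\<^sup>2 + y\<^sup>2)" using assms by (simp add: power_mono)
  qed (use a in auto)
  have q: "z / sqrt (z\<^sup>2 + y\<^sup>2) \<le> w / sqrt (w\<^sup>2 + y\<^sup>2)" by (rule q_mono) (use assms in auto)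
  have "ffun a \<sigma> (sqrt (z\<^sup>2 + y\<^sup>2)) * (z / sqrt (z\<^sup>2 + y\<^sup>2)) \<le> ffun a \<sigma> (sqrt (w\<^sup>2 + y\<^sup>2)) * (w / sqrt (w\<^sup>2 + y\<^sup>2))"
    by (rule mult_mono[OF f q]) (use assms a ffun_nonneg in auto)
  then show ?thesis unfolding phi_def by simp
qed

lemma phi_nonneg: assumes a: "a > 0" and "0 \<le> z" shows "0 \<le> phi a \<sigma> y z"
  using phi_mono_nonneg[OF a order_refl assms(2)] by (simp add: phi_def)

lemma phi_mono: assumes a: "a > 0" and "z \<le> w"
  shows "phi a \<sigma> y z \<le> phi a \<sigma> y w"
proof (cases "0 \<le> z")
  case True then show ?thesis using phi_mono_nonneg[OF a] assms by auto
next
  case False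
  show ?thesis
  proof (cases "0 \<le> w")
    case True
    have "phi a \<sigma> y z \<le> 0" using phi_nonneg[OF a, of "-z" \<sigma> y] False phi_odd[of a \<sigma> y z] by simp
    moreover have "0 \<le> phi a \<sigma> y w" using phi_nonneg[OF a True] .
    ultimately show ?thesis by linarith
  next
    case F2: False
    have "phi a \<sigma> y (-w) \<le> phi a \<sigma> y (-z)" using phi_mono_nonneg[OF a, of "-w" "-z"] assms F2 by simp
    then show ?thesis by (simp add: phi_odd)
  qed
qed

lemma phi_bnd: assumes a: "a > 0" and s: "\<sigma> > 1/2" shows "\<bar>phi a \<sigma> y z\<bar> \<le> finf a \<sigma>"
proof -
  let ?r = "sqrt (z\<^sup>2 + y\<^sup>2)"
  have "sqrt (z\<^sup>2) \<le> ?r" by (rule real_sqrt_le_mono) simp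
  then have "\<bar>z\<bar> \<le> ?r" by simp
  then have q: "\<bar>z / ?r\<bar> \<le> 1"
  proof (cases "?r = 0")
    case True then show ?thesis by simp
  next
    case False
    have "0 \<le> ?r" by simp
    then have "?r > 0" using False by linarith
    then show ?thesis using \<open>\<bar>z\<bar> \<le> ?r\<close> by (simp add: abs_divide divide_le_eq)
  qed
  have f0: "0 \<le> ffun a \<sigma> ?r" using ffun_nonneg a by simp
  have f1: "ffun a \<sigma> ?r \<le> finf a \<sigma>" using ffun_le_finf[OF a s] by simp
  have "\<bar>phi a \<sigma> y z\<bar> = ffun a \<sigma> ?r * \<bar>z / ?r\<bar>" unfolding phi_def using f0 by (simp add: abs_mult)
  also have "\<dots> \<le> ffun a \<sigma> ?r * 1" by (rule mult_left_mono[OF q f0])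
  finally show ?thesis using f1 by simp
qed

lemma phi_oddphi: assumes "a > 0" "\<sigma> > 1/2" "\<beta> > 0"
  shows "oddphi (phi a \<sigma> y) (finf a \<sigma>) \<beta>"
  by unfold_locales (use assms phi_odd phi_mono phi_bnd in auto)

lemma V_deriv:
  fixes p u :: "'a::euclidean_space" and V :: "real \<Rightarrow> real"
  assumes sm: "smooth_fun (\<lambda>x. V (norm (x - p)))"
    and decr: "\<And>r s. 0 \<le> r \<Longrightarrow> r \<le> s \<Longrightarrow> V s \<le> V r"
    and u: "norm u = 1" and r: "r > 0"
  shows "(V has_real_derivative deriv V r) (at r) \<and> deriv V r \<le> 0"
proof -
  have du: "(\<lambda>x. V (norm (x - p))) differentiable_on UNIV"
    using sm by (cases rule: smooth_fun.cases) auto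
  have "(\<lambda>x. V (norm (x - p))) differentiable at (p + r *\<^sub>R u)"
    using du unfolding differentiable_on_def by auto
  moreover have "((\<lambda>t. p + t *\<^sub>R u) has_derivative (\<lambda>h. h *\<^sub>R u)) (at r)"
    by (auto intro!: derivative_eq_intros)
  then have "(\<lambda>t. p + t *\<^sub>R u) differentiable at r" by (rule differentiableI)
  ultimately have "(\<lambda>t. V (norm ((p + t *\<^sub>R u) - p))) differentiable at r"
    by (rule differentiable_compose)
  moreover have "(\<lambda>t. V (norm ((p + t *\<^sub>R u) - p))) = (\<lambda>t. V \<bar>t\<bar>)" using u by simp
  ultimately have "(\<lambda>t. V \<bar>t\<bar>) differentiable at r" by simp
  then obtain D where D0: "((\<lambda>t. V \<bar>t\<bar>) has_real_derivative D) (at r)"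
    unfolding real_differentiable_def by blast
  have D: "(V has_real_derivative D) (at r)"
    by (rule has_field_derivative_transform_within_open[OF D0, of "{0<..}"]) (use r in auto)
  have "D \<le> 0"
  proof (rule ccontr)
    assume "\<not> D \<le> 0"
    then have "D > 0" by simp
    from DERIV_pos_inc_right[OF D this] obtain d where d: "d > 0" "\<And>h. 0 < h \<Longrightarrow> h < d \<Longrightarrow> V r < V (r + h)"
      by blast
    have "V r < V (r + d/2)" using d by simp
    moreover have "V (r + d/2) \<le> V r" by (rule decr) (use r d in auto)
    ultimately show False by simp
  qed
  moreover have "deriv V r = D" using D by (rule DERIV_imp_deriv)
  ultimately show ?thesis using D by simp
qed

lemma V_deriv_zero:
  fixes p x :: "'a::euclidean_space" and V :: "real \<Rightarrow> real"
  assumes x: "x \<notin> closure {y. V (norm (y - p)) \<noteq> 0}" and xp: "x \<noteq> p"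
  shows "deriv V (norm (x - p)) = 0"
proof -
  let ?T = "{y. V (norm (y - p)) \<noteq> 0}"
  let ?r = "norm (x - p)"
  let ?u = "sgn (x - p)"
  have r: "?r > 0" using xp by simp
  have o: "open (- closure ?T)" by (rule open_Compl) simp
  have xin: "x \<in> - closure ?T" using x by simp
  have "\<exists>e>0. ball x e \<subseteq> - closure ?T" using open_contains_ball_eq[OF o] xin by simp
  then obtain e where e: "e > 0" "ball x e \<subseteq> - closure ?T" by blast
  have xu: "x = p + ?r *\<^sub>R ?u" using r by (simp add: sgn_div_norm)
  have nu: "norm ?u = 1" using xp by (simp add: norm_sgn)
  have V0: "V t = 0" if t: "t \<in> {0<..} \<inter> ball ?r e" for t
  proof -
    have "x - (p + t *\<^sub>R ?u) = (?r - t) *\<^sub>R ?u"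
      by (subst xu) (simp add: algebra_simps)
    then have "dist x (p + t *\<^sub>R ?u) = \<bar>?r - t\<bar>"
      using nu by (simp add: dist_norm)
    also have "\<dots> < e" using t by (simp add: dist_real_def)
    finally have "p + t *\<^sub>R ?u \<in> ball x e" by simp
    then have "p + t *\<^sub>R ?u \<in> - closure ?T" by (rule subsetD[OF e(2)])
    then have nc: "p + t *\<^sub>R ?u \<notin> closure ?T" by simp
    have "p + t *\<^sub>R ?u \<notin> ?T"
    proof
      assume "p + t *\<^sub>R ?u \<in> ?T"
      then have "p + t *\<^sub>R ?u \<in> closure ?T" by (rule closure_subset[THEN subsetD])
      with nc show False by contradiction
    qed
    then show ?thesis using nu t by simp
  qed
  have "((\<lambda>_. 0) has_real_derivative 0) (at ?r)" by simp
  then have "(V has_real_derivative 0) (at ?r)"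
  proof (rule has_field_derivative_transform_within_open[of _ _ _ "{0<..} \<inter> ball ?r e"])
    show "open ({0<..} \<inter> ball ?r e)" by (intro open_Int open_greaterThan open_ball)
    show "?r \<in> {0<..} \<inter> ball ?r e" using r e by simp
    show "\<And>t. t \<in> {0<..} \<inter> ball ?r e \<Longrightarrow> 0 = V t" using V0 by simp
  qed
  then show ?thesis by (rule DERIV_imp_deriv)
qed

lemma commN_formula:
  fixes b x :: "'a::euclidean_space"
  assumes b: "b \<noteq> 0"
  shows "commN a \<sigma> b N V (of_int j *\<^sub>R b) x =
     -2 * deriv V (norm (x - of_int j *\<^sub>R b)) / norm (x - of_int j *\<^sub>R b) *
       ((x \<bullet> sgn b - of_int j * norm b) * (\<Sum>k\<in>{- int N..int N}. phi a \<sigma> (norm (orth_comp b x)) (x \<bullet> sgn b - of_int k * norm b))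
        + (norm (orth_comp b x))\<^sup>2 * (\<Sum>k\<in>{- int N..int N}. ffun a \<sigma> (norm (x - of_int k *\<^sub>R b)) / norm (x - of_int k *\<^sub>R b)))"
proof -
  define s where "s = x \<bullet> sgn b"
  define y where "y = norm (orth_comp b x)"
  define D where "D = deriv V (norm (x - of_int j *\<^sub>R b))"
  define rj where "rj = norm (x - of_int j *\<^sub>R b)"
  have ip: "\<And>c d. (x - c *\<^sub>R b) \<bullet> (x - d *\<^sub>R b) = (s - c * norm b) * (s - d * norm b) + y\<^sup>2"
    unfolding s_def y_def by (rule decomp[OF b])
  have nr: "\<And>c. norm (x - c *\<^sub>R b) = sqrt ((s - c * norm b)\<^sup>2 + y\<^sup>2)"
  proof -
    fix c
    have "(norm (x - c *\<^sub>R b))\<^sup>2 = (s - c * norm b)\<^sup>2 + y\<^sup>2"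
      unfolding s_def y_def by (rule decomp[OF b])
    then show "norm (x - c *\<^sub>R b) = sqrt ((s - c * norm b)\<^sup>2 + y\<^sup>2)"
      by (metis norm_ge_zero real_sqrt_unique)
  qed
  have termk: "- 2 * (gradF a \<sigma> (of_int k *\<^sub>R b) x \<bullet> gradRad V (of_int j *\<^sub>R b) x) =
     -2 * D / rj * ((s - of_int j * norm b) * phi a \<sigma> y (s - of_int k * norm b)
        + y\<^sup>2 * (ffun a \<sigma> (norm (x - of_int k *\<^sub>R b)) / norm (x - of_int k *\<^sub>R b)))" for k :: int
  proof -
    define rk where "rk = norm (x - of_int k *\<^sub>R b)"
    have rk: "sqrt ((s - of_int k * norm b)\<^sup>2 + y\<^sup>2) = rk" unfolding rk_def by (rule nr[symmetric])
    have "gradF a \<sigma> (of_int k *\<^sub>R b) x \<bullet> gradRad V (of_int j *\<^sub>R b) x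
        = ffun a \<sigma> rk * D * inverse rk * inverse rj * ((x - of_int k *\<^sub>R b) \<bullet> (x - of_int j *\<^sub>R b))"
      unfolding gradF_def gradRad_def rk_def D_def rj_def by (simp add: sgn_div_norm divide_inverse)
    also have "\<dots> = ffun a \<sigma> rk * D * inverse rk * inverse rj * ((s - of_int k * norm b) * (s - of_int j * norm b) + y\<^sup>2)"
      by (simp only: ip)
    finally show ?thesis unfolding phi_def rk rk_def[symmetric]
      by (simp add: divide_inverse algebra_simps)
  qed
  have "commN a \<sigma> b N V (of_int j *\<^sub>R b) x = (\<Sum>k\<in>{- int N..int N}. -2 * D / rj * ((s - of_int j * norm b) * phi a \<sigma> y (s - of_int k * norm b)
        + y\<^sup>2 * (ffun a \<sigma> (norm (x - of_int k *\<^sub>R b)) / norm (x - of_int k *\<^sub>R b))))"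
    unfolding commN_def termk ..
  also have "\<dots> = -2 * D / rj * ((s - of_int j * norm b) * (\<Sum>k\<in>{- int N..int N}. phi a \<sigma> y (s - of_int k * norm b))
        + y\<^sup>2 * (\<Sum>k\<in>{- int N..int N}. ffun a \<sigma> (norm (x - of_int k *\<^sub>R b)) / norm (x - of_int k *\<^sub>R b)))"
    by (simp only: sum_distrib_left sum.distrib[symmetric])
  finally show ?thesis unfolding D_def rj_def s_def y_def .
qed

lemma finf_nonneg: "a > 0 \<Longrightarrow> \<sigma> > 1/2 \<Longrightarrow> 0 \<le> finf a \<sigma>"
  using phi_bnd[of a \<sigma> 0 0] by linarith

lemma common:
  fixes b x :: "'a::euclidean_space" and V :: "real \<Rightarrow> real" and N :: nat
  assumes b: "b \<noteq> 0" and a: "a > 0" and sig: "\<sigma> > 1/2" and j: "j \<in> {-1, 1::int}"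
    and sm: "smooth_fun (\<lambda>x. V (norm (x - of_int j *\<^sub>R b)))"
    and decr: "\<And>r s. 0 \<le> r \<Longrightarrow> r \<le> s \<Longrightarrow> V s \<le> V r"
  defines "rj \<equiv> norm (x - of_int j *\<^sub>R b)" and "zj \<equiv> x \<bullet> sgn b - of_int j * norm b"
    and "y \<equiv> norm (orth_comp b x)"
    and "P \<equiv> (\<Sum>k\<in>{- int N..int N}. ffun a \<sigma> (norm (x - of_int k *\<^sub>R b)) / norm (x - of_int k *\<^sub>R b))"
  shows "commN a \<sigma> b N V (of_int j *\<^sub>R b) x = -2 * deriv V rj / rj * (zj * (\<Sum>k\<in>{- int N..int N}. phi a \<sigma> y (x \<bullet> sgn b - of_int k * norm b)) + y\<^sup>2 * P)"
    "zj * (\<Sum>k\<in>{- int N..int N}. phi a \<sigma> y (x \<bullet> sgn b - of_int k * norm b)) \<ge> -2 * finf a \<sigma> * rj"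
    "rj > 0 \<Longrightarrow> deriv V rj \<le> 0"
    "0 \<le> P" "y \<le> rj" "\<bar>zj\<bar> \<le> rj"
proof -
  show "commN a \<sigma> b N V (of_int j *\<^sub>R b) x = -2 * deriv V rj / rj * (zj * (\<Sum>k\<in>{- int N..int N}. phi a \<sigma> y (x \<bullet> sgn b - of_int k * norm b)) + y\<^sup>2 * P)"
    unfolding rj_def zj_def y_def P_def by (rule commN_formula[OF b])
  have sq: "rj\<^sup>2 = zj\<^sup>2 + y\<^sup>2"
    unfolding rj_def zj_def y_def using decomp(5)[OF b, of x "of_int j"] by simp
  have r0: "0 \<le> rj" unfolding rj_def by simp
  have "sqrt (zj\<^sup>2) \<le> sqrt (rj\<^sup>2)" using sq by (intro real_sqrt_le_mono) simp
  then show zr: "\<bar>zj\<bar> \<le> rj" using r0 by simp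
  have "sqrt (y\<^sup>2) \<le> sqrt (rj\<^sup>2)" using sq by (intro real_sqrt_le_mono) simp
  then show "y \<le> rj" using r0 unfolding y_def by simp
  have nb: "norm b > 0" using b by simp
  interpret op: oddphi "phi a \<sigma> y" "finf a \<sigma>" "norm b" by (rule phi_oddphi[OF a sig nb])
  have "- 2 * finf a \<sigma> * \<bar>x \<bullet> sgn b - of_int j * norm b\<bar> \<le> (x \<bullet> sgn b - of_int j * norm b) * op.S N (x \<bullet> sgn b)"
    by (rule op.key[OF j])
  then have k: "- 2 * finf a \<sigma> * \<bar>zj\<bar> \<le> zj * (\<Sum>k\<in>{- int N..int N}. phi a \<sigma> y (x \<bullet> sgn b - of_int k * norm b))"
    unfolding op.S_def zj_def by simp
  have "- 2 * finf a \<sigma> * rj \<le> - 2 * finf a \<sigma> * \<bar>zj\<bar>"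
    using zr finf_nonneg[OF a sig] by (simp add: mult_left_mono)
  then show "zj * (\<Sum>k\<in>{- int N..int N}. phi a \<sigma> y (x \<bullet> sgn b - of_int k * norm b)) \<ge> -2 * finf a \<sigma> * rj"
    using k by linarith
  show "rj > 0 \<Longrightarrow> deriv V rj \<le> 0"
  proof -
    assume rp: "rj > 0"
    then have "x - of_int j *\<^sub>R b \<noteq> 0" unfolding rj_def by auto
    then have "norm (sgn (x - of_int j *\<^sub>R b)) = 1" by (simp add: norm_sgn)
    from V_deriv[OF sm decr this rp] show ?thesis by simp
  qed
  show "0 \<le> P" unfolding P_def
    by (intro sum_nonneg divide_nonneg_nonneg ffun_nonneg) (use a in auto)
qed

lemma part1:
  fixes b x :: "'a::euclidean_space" and V :: "real \<Rightarrow> real"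
  assumes b: "b \<noteq> 0" and a: "a > 0" and sig: "\<sigma> > 1/2" and j: "j \<in> {-1, 1::int}"
    and sm: "smooth_fun (\<lambda>x. V (norm (x - of_int j *\<^sub>R b)))"
    and decr: "\<And>r s. 0 \<le> r \<Longrightarrow> r \<le> s \<Longrightarrow> V s \<le> V r"
  shows "commN a \<sigma> b N V (of_int j *\<^sub>R b) x \<ge> - 4 * finf a \<sigma> * \<bar>deriv V (norm (x - of_int j *\<^sub>R b))\<bar>"
proof -
  note c1 = common(1)[OF b a sig j sm decr, where x=x and N=N]
  note c2 = common(2)[OF b a sig j sm decr, where x=x and N=N]
  note c3 = common(3)[OF b a sig j sm decr, where x=x]
  note c4 = common(4)[OF b a sig j sm decr, where x=x and N=N]
  define rj where "rj = norm (x - of_int j *\<^sub>R b)"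
  define X where "X = (x \<bullet> sgn b - of_int j * norm b) * (\<Sum>k\<in>{- int N..int N}. phi a \<sigma> (norm (orth_comp b x)) (x \<bullet> sgn b - of_int k * norm b)) + (norm (orth_comp b x))\<^sup>2 * (\<Sum>k\<in>{- int N..int N}. ffun a \<sigma> (norm (x - of_int k *\<^sub>R b)) / norm (x - of_int k *\<^sub>R b))"
  have eq: "commN a \<sigma> b N V (of_int j *\<^sub>R b) x = -2 * deriv V rj / rj * X"
    using c1 unfolding rj_def X_def .
  have fn: "0 \<le> finf a \<sigma>" by (rule finf_nonneg[OF a sig])
  have X: "X \<ge> -2 * finf a \<sigma> * rj"
    using c2 c4 unfolding X_def rj_def
    by (smt (verit) mult_nonneg_nonneg zero_le_power2)
  show ?thesis
  proof (cases "rj = 0")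
    case True
    then show ?thesis unfolding eq rj_def[symmetric] using fn by simp
  next
    case False
    then have rp: "rj > 0" unfolding rj_def by simp
    have D: "deriv V rj \<le> 0" using c3 rp unfolding rj_def by simp
    have cpos: "-2 * deriv V rj / rj \<ge> 0" using D rp by (simp add: divide_nonpos_pos)
    have "-2 * deriv V rj / rj * (-2 * finf a \<sigma> * rj) \<le> -2 * deriv V rj / rj * X"
      by (rule mult_left_mono[OF X cpos])
    moreover have "-2 * deriv V rj / rj * (-2 * finf a \<sigma> * rj) = - 4 * finf a \<sigma> * \<bar>deriv V rj\<bar>"
    proof -
      have ab: "\<bar>deriv V rj\<bar> = - deriv V rj" using D by simp
      have "-2 * deriv V rj / rj * (-2 * finf a \<sigma> * rj) = 4 * deriv V rj * finf a \<sigma> * (rj / rj)"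
        by (simp add: divide_inverse algebra_simps)
      also have "rj / rj = 1" using rp by simp
      finally show ?thesis unfolding ab by simp
    qed
    ultimately show ?thesis unfolding eq rj_def[symmetric] by simp
  qed
qed

lemma harm_sum_lower:
  fixes g :: "int \<Rightarrow> real"
  assumes nn: "\<And>k. k \<in> {-int N..int N} \<Longrightarrow> 0 \<le> g k"
    and le: "\<And>n. n \<in> {1..Suc N} \<Longrightarrow> c / real n \<le> g (int n - 1)"
  shows "c * harm (Suc N) \<le> (\<Sum>k\<in>{-int N..int N}. g k)"
proof -
  have "c * harm (Suc N) = (\<Sum>n\<in>{1..Suc N}. c / real n)"
    unfolding harm_def by (simp only: sum_distrib_left divide_inverse)
  also have "\<dots> \<le> (\<Sum>n\<in>{1..Suc N}. g (int n - 1))" by (rule sum_mono) (rule le)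
  also have "\<dots> = (\<Sum>k\<in>(\<lambda>n. int n - 1) ` {1..Suc N}. g k)"
    by (subst sum.reindex) (auto simp: inj_on_def)
  also have "\<dots> \<le> (\<Sum>k\<in>{-int N..int N}. g k)"
  proof (rule sum_mono2)
    show "(\<lambda>n. int n - 1) ` {1..Suc N} \<subseteq> {-int N..int N}" by auto
    show "\<And>k. k \<in> {-int N..int N} - (\<lambda>n. int n - 1) ` {1..Suc N} \<Longrightarrow> 0 \<le> g k" using nn by blast
  qed simp
  finally show ?thesis .
qed

lemma part2:
  fixes b x :: "'a::euclidean_space" and V :: "real \<Rightarrow> real" and N :: nat
  assumes b: "b \<noteq> 0" and a: "a > 0" and sig: "\<sigma> > 1/2" and j: "j \<in> {-1, 1::int}"
    and sm: "smooth_fun (\<lambda>x. V (norm (x - of_int j *\<^sub>R b)))"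
    and decr: "\<And>r s. 0 \<le> r \<Longrightarrow> r \<le> s \<Longrightarrow> V s \<le> V r"
    and R: "\<And>z. z \<in> closure {z. V (norm (z - of_int j *\<^sub>R b)) \<noteq> 0} \<Longrightarrow> norm (z - of_int j *\<^sub>R b) \<le> R"
    and neg: "commN a \<sigma> b N V (of_int j *\<^sub>R b) x < 0"
  shows "x \<in> closure {z. V (norm (z - of_int j *\<^sub>R b)) \<noteq> 0}"
    "(1+a) powr (-\<sigma>) * (min (norm (orth_comp b x)) 1)^3 * harm (Suc N) < 2 * finf a \<sigma> * R * (R + norm b)"
    "norm (orth_comp b x) \<le> R"
proof -
  note c1 = common(1)[OF b a sig j sm decr, where x=x and N=N]
  note c2 = common(2)[OF b a sig j sm decr, where x=x and N=N]
  note c3 = common(3)[OF b a sig j sm decr, where x=x]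
  note c4 = common(4)[OF b a sig j sm decr, where x=x and N=N]
  note c5 = common(5)[OF b a sig j sm decr, where x=x]
  define p where "p = of_int j *\<^sub>R b"
  define rj where "rj = norm (x - p)"
  define y where "y = norm (orth_comp b x)"
  define P where "P = (\<Sum>k\<in>{- int N..int N}. ffun a \<sigma> (norm (x - of_int k *\<^sub>R b)) / norm (x - of_int k *\<^sub>R b))"
  define Z where "Z = (x \<bullet> sgn b - of_int j * norm b) * (\<Sum>k\<in>{- int N..int N}. phi a \<sigma> y (x \<bullet> sgn b - of_int k * norm b))"
  define D where "D = deriv V rj"
  have eq: "commN a \<sigma> b N V p x = -2 * D / rj * (Z + y\<^sup>2 * P)"
    using c1 unfolding p_def rj_def D_def Z_def y_def P_def .
  have Zb: "Z \<ge> -2 * finf a \<sigma> * rj" using c2 unfolding Z_def y_def rj_def p_def .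
  have P0: "0 \<le> P" using c4 unfolding P_def .
  have yr: "y \<le> rj" using c5 unfolding y_def rj_def p_def .
  have negp: "commN a \<sigma> b N V p x < 0" using neg unfolding p_def .
  have rp: "rj > 0"
  proof (rule ccontr)
    assume "\<not> rj > 0"
    then have "rj = 0" unfolding rj_def by simp
    then show False using negp unfolding eq by simp
  qed
  have D0: "D \<le> 0" using c3 rp unfolding D_def rj_def p_def by simp
  have Dn: "D \<noteq> 0"
  proof
    assume "D = 0" then show False using negp unfolding eq by simp
  qed
  show xc: "x \<in> closure {z. V (norm (z - of_int j *\<^sub>R b)) \<noteq> 0}"
  proof (rule ccontr)
    assume xn: "x \<notin> closure {z. V (norm (z - of_int j *\<^sub>R b)) \<noteq> 0}"
    have "x \<noteq> p" using rp unfolding rj_def by auto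
    then have "deriv V (norm (x - p)) = 0" using V_deriv_zero[OF xn[folded p_def]] by simp
    then show False using Dn unfolding D_def rj_def by simp
  qed
  have rR: "rj \<le> R" using R[OF xc] unfolding rj_def p_def .
  show "norm (orth_comp b x) \<le> R" using yr rR unfolding y_def by simp
  have cpos: "-2 * D / rj > 0" using D0 Dn rp by (simp add: divide_neg_pos)
  have X: "Z + y\<^sup>2 * P < 0"
  proof (rule ccontr)
    assume "\<not> Z + y\<^sup>2 * P < 0"
    then have "0 \<le> Z + y\<^sup>2 * P" by simp
    then have "0 \<le> -2 * D / rj * (Z + y\<^sup>2 * P)" using cpos by (intro mult_nonneg_nonneg) auto
    then show False using negp unfolding eq by simp
  qed
  have yP: "y\<^sup>2 * P < 2 * finf a \<sigma> * rj" using X Zb by linarith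
  have fpos: "finf a \<sigma> > 0"
  proof -
    have "0 \<le> y\<^sup>2 * P" using P0 by simp
    then have "0 < finf a \<sigma> * rj" using yP by linarith
    then show ?thesis using rp by (simp add: zero_less_mult_iff)
  qed
  have hpos: "0 \<le> (harm (Suc N) :: real)" unfolding harm_def by (intro sum_nonneg) simp
  let ?\<kappa> = "(1+a) powr (-\<sigma>)"
  have kpos: "?\<kappa> > 0" using a by simp
  have main: "?\<kappa> * (min y 1)^3 * harm (Suc N) < 2 * finf a \<sigma> * rj * (rj + norm b)"
  proof (cases "y = 0")
    case True
    then show ?thesis using fpos rp by (simp add: add_pos_nonneg)
  next
    case False
    then have ypos: "y > 0" unfolding y_def by simp
    have "0 \<le> norm b" by simp
    then have rb: "rj + norm b \<noteq> 0" using rp by linarith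
    have rk: "y \<le> norm (x - of_int k *\<^sub>R b)" for k :: int
    proof -
      have "(norm (x - of_int k *\<^sub>R b))\<^sup>2 = (x \<bullet> sgn b - of_int k * norm b)\<^sup>2 + y\<^sup>2"
        unfolding y_def by (rule decomp(5)[OF b])
      then have "y\<^sup>2 \<le> (norm (x - of_int k *\<^sub>R b))\<^sup>2" by simp
      then show ?thesis using ypos by (simp add: power2_le_iff_abs_le)
    qed
    have Pge: "(ffun a \<sigma> y / (rj + norm b)) * harm (Suc N) \<le> P"
      unfolding P_def
    proof (rule harm_sum_lower)
      fix k :: int
      show "0 \<le> ffun a \<sigma> (norm (x - of_int k *\<^sub>R b)) / norm (x - of_int k *\<^sub>R b)"
        using a by (simp add: ffun_nonneg)
    next
      fix n :: nat assume n: "n \<in> {1..Suc N}"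
      define k where "k = int n - 1"
      have rkpos: "norm (x - of_int k *\<^sub>R b) > 0" using rk[of k] ypos by linarith
      have "x - of_int k *\<^sub>R b = (x - p) + (of_int j - of_int k) *\<^sub>R b" unfolding p_def by (simp add: algebra_simps)
      then have "norm (x - of_int k *\<^sub>R b) \<le> rj + \<bar>of_int j - of_int k\<bar> * norm b"
        unfolding rj_def by (metis norm_triangle_ineq norm_scaleR)
      also have "\<bar>of_int j - of_int k\<bar> \<le> real n"
        using j n unfolding k_def by auto
      then have "rj + \<bar>of_int j - of_int k\<bar> * norm b \<le> rj + real n * norm b"
        by (simp add: mult_right_mono)
      also have "\<dots> \<le> (rj + norm b) * real n" using n rp by (simp add: algebra_simps)
      finally have rkle: "norm (x - of_int k *\<^sub>R b) \<le> (rj + norm b) * real n" .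
      have fy: "0 \<le> ffun a \<sigma> y" using a by (simp add: ffun_nonneg)
      have fm: "ffun a \<sigma> y \<le> ffun a \<sigma> (norm (x - of_int k *\<^sub>R b))"
        by (rule ffun_mono) (use a ypos rk in auto)
      have "ffun a \<sigma> y / (rj + norm b) / real n = ffun a \<sigma> y / ((rj + norm b) * real n)" by simp
      also have "\<dots> \<le> ffun a \<sigma> y / norm (x - of_int k *\<^sub>R b)"
      proof (rule divide_left_mono[OF rkle fy])
        have "0 < rj + norm b" using rp by (simp add: add_pos_nonneg)
        moreover have "0 < real n" using n by simp
        ultimately show "0 < (rj + norm b) * real n * norm (x - of_int k *\<^sub>R b)"
          using rkpos by simp
      qed
      also have "\<dots> \<le> ffun a \<sigma> (norm (x - of_int k *\<^sub>R b)) / norm (x - of_int k *\<^sub>R b)"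
        by (rule divide_right_mono[OF fm]) simp
      finally show "ffun a \<sigma> y / (rj + norm b) / real n \<le> ffun a \<sigma> (norm (x - of_int (int n - 1) *\<^sub>R b)) / norm (x - of_int (int n - 1) *\<^sub>R b)"
        unfolding k_def .
    qed
    have fl: "?\<kappa> * min y 1 \<le> ffun a \<sigma> y" by (rule ffun_lower) (use a ypos sig in auto)
    have m3: "(min y 1)^3 \<le> y\<^sup>2 * min y 1"
    proof -
      have "(min y 1)\<^sup>2 \<le> y\<^sup>2" using ypos by (simp add: power_mono)
      then have "(min y 1)\<^sup>2 * min y 1 \<le> y\<^sup>2 * min y 1" using ypos by (simp add: mult_right_mono)
      then show ?thesis by (simp add: power2_eq_square power3_eq_cube)
    qed
    have "?\<kappa> * (min y 1)^3 * harm (Suc N) \<le> ?\<kappa> * (y\<^sup>2 * min y 1) * harm (Suc N)"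
      using m3 kpos hpos by (simp add: mult_left_mono mult_right_mono)
    also have "\<dots> = y\<^sup>2 * (?\<kappa> * min y 1) * harm (Suc N)" by simp
    also have "\<dots> \<le> y\<^sup>2 * ffun a \<sigma> y * harm (Suc N)"
      using fl hpos by (simp add: mult_left_mono mult_right_mono)
    also have "\<dots> = y\<^sup>2 * ((ffun a \<sigma> y / (rj + norm b)) * harm (Suc N)) * (rj + norm b)"
      using rb by (simp add: field_simps)
    also have "\<dots> \<le> y\<^sup>2 * P * (rj + norm b)"
    proof (rule mult_right_mono)
      show "y\<^sup>2 * (ffun a \<sigma> y / (rj + norm b) * harm (Suc N)) \<le> y\<^sup>2 * P"
        by (rule mult_left_mono[OF Pge]) simp
      show "0 \<le> rj + norm b" using rp \<open>0 \<le> norm b\<close> by linarith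
    qed
    also have "\<dots> < 2 * finf a \<sigma> * rj * (rj + norm b)"
    proof (rule mult_strict_right_mono[OF yP])
      show "0 < rj + norm b" using rp \<open>0 \<le> norm b\<close> by linarith
    qed
    finally show ?thesis .
  qed
  also have "\<dots> \<le> 2 * finf a \<sigma> * R * (R + norm b)"
    using rR rp fpos by (intro mult_mono mult_left_mono) auto
  finally show "?\<kappa> * (min (norm (orth_comp b x)) 1)^3 * harm (Suc N) < 2 * finf a \<sigma> * R * (R + norm b)"
    unfolding y_def .
qed

lemma cube_root_le: fixes y d :: real assumes "0 \<le> y" "y^3 \<le> d" shows "y \<le> d powr (1/3)"
proof (cases "y = 0")
  case True then show ?thesis by simp
next
  case False
  then have yp: "y > 0" using assms by simp
  have e: "y^3 = y powr 3" using powr_realpow[OF yp, of 3] by simp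
  have e2: "(y powr 3) powr (1/3) = y powr (3 * (1/3))" by (rule powr_powr)
  have e3: "y powr (3 * (1/3)) = y" using yp by simp
  have "(y^3) powr (1/3) = y" by (simp only: e e2 e3)
  moreover have "(y^3) powr (1/3) \<le> d powr (1/3)" by (rule powr_mono2) (use assms in auto)
  ultimately show ?thesis by simp
qed

lemma harm_pos: "0 < (harm (Suc N) :: real)"
  unfolding harm_def by (intro sum_pos) auto

theorem proposition2p4:
  fixes a \<sigma> :: real and b :: "real ^ 'n" and V :: "int \<Rightarrow> real \<Rightarrow> real"
  assumes dim: "CARD('n) \<ge> 3"
    and a_pos: "a > 0" and sigma: "\<sigma> > 1/2"
    and b_nz: "b \<noteq> 0"
    and smooth: "\<And>j. j \<in> {-1, 1} \<Longrightarrow> smooth_fun (\<lambda>x. V j (norm (x - of_int j *\<^sub>R b)))"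
    and decr: "\<And>j r s. j \<in> {-1, 1} \<Longrightarrow> 0 \<le> r \<Longrightarrow> r \<le> s \<Longrightarrow> V j s \<le> V j r"
    and compact_supp: "\<And>j. j \<in> {-1, 1} \<Longrightarrow>
          compact (closure {x. V j (norm (x - of_int j *\<^sub>R b)) \<noteq> 0})"
  shows
    "(\<forall>N\<ge>1. \<forall>j\<in>{-1, 1}. \<forall>x.
        commN a \<sigma> b N (V j) (of_int j *\<^sub>R b) x \<ge>
          - 4 * finf a \<sigma> * \<bar>deriv (V j) (norm (x - of_int j *\<^sub>R b))\<bar> *
            indicator {y. commN a \<sigma> b N (V j) (of_int j *\<^sub>R b) y < 0} x)
     \<and> (\<exists>\<delta> :: nat \<Rightarrow> real. \<delta> \<longlonglongrightarrow> 0 \<and>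
        (\<forall>N\<ge>1. \<forall>j\<in>{-1, 1}.
           {x. commN a \<sigma> b N (V j) (of_int j *\<^sub>R b) x < 0}
             \<subseteq> {x. norm (orth_comp b x) \<le> \<delta> N}
                \<inter> closure {x. V j (norm (x - of_int j *\<^sub>R b)) \<noteq> 0}))"
proof (intro conjI)
  show "\<forall>N\<ge>1. \<forall>j\<in>{-1, 1}. \<forall>x.
        commN a \<sigma> b N (V j) (of_int j *\<^sub>R b) x \<ge>
          - 4 * finf a \<sigma> * \<bar>deriv (V j) (norm (x - of_int j *\<^sub>R b))\<bar> *
            indicator {y. commN a \<sigma> b N (V j) (of_int j *\<^sub>R b) y < 0} x"
  proof (intro allI impI ballI)
    fix N :: nat and j :: int and x :: "real ^ 'n"
    assume j: "j \<in> {-1, 1}"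
    have p1: "commN a \<sigma> b N (V j) (of_int j *\<^sub>R b) x \<ge> - 4 * finf a \<sigma> * \<bar>deriv (V j) (norm (x - of_int j *\<^sub>R b))\<bar>"
      by (rule part1[OF b_nz a_pos sigma j smooth[OF j]]) (rule decr[OF j])
    show "commN a \<sigma> b N (V j) (of_int j *\<^sub>R b) x \<ge>
          - 4 * finf a \<sigma> * \<bar>deriv (V j) (norm (x - of_int j *\<^sub>R b))\<bar> *
            indicator {y. commN a \<sigma> b N (V j) (of_int j *\<^sub>R b) y < 0} x"
    proof (cases "commN a \<sigma> b N (V j) (of_int j *\<^sub>R b) x < 0")
      case True then show ?thesis using p1 by (simp add: indicator_def)
    next
      case False then show ?thesis by (simp add: indicator_def)
    qed
  qed
next
  have "\<exists>R. \<forall>j\<in>{-1,1::int}. \<forall>z\<in>closure {x. V j (norm (x - of_int j *\<^sub>R b)) \<noteq> 0}. norm (z - of_int j *\<^sub>R b) \<le> R"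
  proof -
    have "\<exists>R. \<forall>z\<in>closure {x. V j (norm (x - of_int j *\<^sub>R b)) \<noteq> 0}. norm (z - of_int j *\<^sub>R b) \<le> R"
      if j: "j \<in> {-1, 1::int}" for j
    proof -
      have "bounded (closure {x. V j (norm (x - of_int j *\<^sub>R b)) \<noteq> 0})"
        using compact_supp[OF j] by (rule compact_imp_bounded)
      then obtain e where e: "\<forall>z\<in>closure {x. V j (norm (x - of_int j *\<^sub>R b)) \<noteq> 0}. dist (of_int j *\<^sub>R b) z \<le> e"
        unfolding bounded_any_center[where a="of_int j *\<^sub>R b"] by blast
      show ?thesis using e by (intro exI[of _ e]) (simp add: dist_norm norm_minus_commute)
    qed
    then obtain R1 R2 where
      R1: "\<forall>z\<in>closure {x. V 1 (norm (x - of_int 1 *\<^sub>R b)) \<noteq> 0}. norm (z - of_int 1 *\<^sub>R b) \<le> R1" and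
      R2: "\<forall>z\<in>closure {x. V (-1) (norm (x - of_int (-1) *\<^sub>R b)) \<noteq> 0}. norm (z - of_int (-1) *\<^sub>R b) \<le> R2"
      by (metis insertCI)
    show ?thesis
    proof (intro exI[of _ "max R1 R2"] ballI)
      fix j :: int and z assume j: "j \<in> {-1, 1}" and z: "z \<in> closure {x. V j (norm (x - of_int j *\<^sub>R b)) \<noteq> 0}"
      from j consider "j = 1" | "j = -1" by auto
      then show "norm (z - of_int j *\<^sub>R b) \<le> max R1 R2"
      proof cases
        case 1 then show ?thesis using R1 z by fastforce
      next
        case 2 then show ?thesis using R2 z by fastforce
      qed
    qed
  qed
  then obtain R0 where R0: "\<And>j z. j \<in> {-1,1::int} \<Longrightarrow> z\<in>closure {x. V j (norm (x - of_int j *\<^sub>R b)) \<noteq> 0} \<Longrightarrow> norm (z - of_int j *\<^sub>R b) \<le> R0"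
    by blast
  define R where "R = max 0 R0"
  have R: "\<And>j z. j \<in> {-1,1::int} \<Longrightarrow> z\<in>closure {x. V j (norm (x - of_int j *\<^sub>R b)) \<noteq> 0} \<Longrightarrow> norm (z - of_int j *\<^sub>R b) \<le> R"
    using R0 unfolding R_def by (meson max.coboundedI2)
  have R0le: "0 \<le> R" unfolding R_def by simp
  define \<kappa> where "\<kappa> = (1+a) powr (-\<sigma>)"
  have kpos: "\<kappa> > 0" unfolding \<kappa>_def using a_pos by simp
  define C where "C = 2 * finf a \<sigma> * R * (R + norm b)"
  have C0: "0 \<le> C" unfolding C_def using finf_nonneg[OF a_pos sigma] R0le by simp
  define Dn where "Dn = (\<lambda>N::nat. C / (\<kappa> * harm (Suc N)))"
  define \<delta> where "\<delta> = (\<lambda>N. if Dn N < 1 then Dn N powr (1/3) else R)"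
  show "\<exists>\<delta> :: nat \<Rightarrow> real. \<delta> \<longlonglongrightarrow> 0 \<and>
        (\<forall>N\<ge>1. \<forall>j\<in>{-1, 1}.
           {x. commN a \<sigma> b N (V j) (of_int j *\<^sub>R b) x < 0}
             \<subseteq> {x. norm (orth_comp b x) \<le> \<delta> N}
                \<inter> closure {x. V j (norm (x - of_int j *\<^sub>R b)) \<noteq> 0})"
  proof (intro exI[of _ \<delta>] conjI allI impI ballI subsetI)
    have h: "filterlim (\<lambda>N. harm (Suc N) :: real) at_top sequentially"
      by (rule filterlim_compose[OF harm_at_top filterlim_Suc])
    have h2: "filterlim (\<lambda>N. \<kappa> * harm (Suc N)) at_top sequentially"
      by (rule filterlim_tendsto_pos_mult_at_top[OF tendsto_const kpos h])
    have D0: "Dn \<longlonglongrightarrow> 0" unfolding Dn_def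
      by (rule tendsto_divide_0[OF tendsto_const filterlim_at_top_imp_at_infinity[OF h2]])
    have ev: "eventually (\<lambda>N. Dn N < 1) sequentially"
      using order_tendstoD(2)[OF D0, of 1] by simp
    have Dnn: "eventually (\<lambda>N. 0 \<le> Dn N) sequentially"
      unfolding Dn_def using C0 kpos harm_pos by (intro always_eventually allI divide_nonneg_pos) auto
    have "(\<lambda>N. Dn N powr (1/3)) \<longlonglongrightarrow> 0"
      by (rule tendsto_zero_powrI[OF D0 tendsto_const Dnn]) simp
    moreover have "eventually (\<lambda>N. Dn N powr (1/3) = \<delta> N) sequentially"
      using ev by eventually_elim (simp add: \<delta>_def)
    ultimately show "\<delta> \<longlonglongrightarrow> 0" by (rule Lim_transform_eventually)
  next
    fix N :: nat and j :: int and x :: "real ^ 'n"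
    assume N: "1 \<le> N" and j: "j \<in> {-1, 1}" and x: "x \<in> {x. commN a \<sigma> b N (V j) (of_int j *\<^sub>R b) x < 0}"
    have neg: "commN a \<sigma> b N (V j) (of_int j *\<^sub>R b) x < 0" using x by simp
    note P2 = part2[OF b_nz a_pos sigma j smooth[OF j] decr[OF j] R[OF j] neg]
    define y where "y = norm (orth_comp b x)"
    have y0: "0 \<le> y" unfolding y_def by simp
    have yR: "y \<le> R" using P2(3) unfolding y_def .
    have ineq: "\<kappa> * (min y 1)^3 * harm (Suc N) < C"
      using P2(2) unfolding y_def \<kappa>_def C_def .
    have "y \<le> \<delta> N"
    proof (cases "Dn N < 1")
      case False then show ?thesis using yR unfolding \<delta>_def by simp
    next
      case True
      have kh: "0 < \<kappa> * harm (Suc N)" using kpos harm_pos by simp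
      have "(min y 1)^3 * (\<kappa> * harm (Suc N)) < C" using ineq by (simp add: algebra_simps)
      then have m3: "(min y 1)^3 < Dn N" unfolding Dn_def using kh by (simp add: pos_less_divide_eq)
      have "y < 1"
      proof (rule ccontr)
        assume "\<not> y < 1"
        then have "min y 1 = 1" by simp
        then show False using m3 True by simp
      qed
      then have "y^3 \<le> Dn N" using m3 by simp
      then have "y \<le> Dn N powr (1/3)" by (rule cube_root_le[OF y0])
      then show ?thesis unfolding \<delta>_def using True by simp
    qed
    then show "x \<in> {x. norm (orth_comp b x) \<le> \<delta> N} \<inter> closure {x. V j (norm (x - of_int j *\<^sub>R b)) \<noteq> 0}"
      using P2(1) unfolding y_def by simp
  qed
qed

end
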